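(* Assume $s_1=\cdots=s_m=s$ and let $\delta\in\{1,\dots,s^m\}$. Let $v\in\{0,\dots,m-1\}$ be such that $s^v\le\delta\le s^{v+1}$. If $\delta^\perp$ is a positive integer with $\delta^\perp\le\left\lfloor\left(s-\frac{\delta}{s^v}+1\right)s^{m-v-1}\right\rfloor$, then $$\{N\in\Delta(s,\dots,s)\mid D^\perp(N)<\delta^\perp\}\subseteq\{N\in\Delta(s,\dots,s)\mid D(N)\ge\delta\}.$$
   Context: $\Delta(s,\dots,s)=\{X_1^{i_1}\cdots X_m^{i_m}\mid 0\le i_t<s,\ t=1,\dots,m\}$. For $N=X_1^{i_1}\cdots X_m^{i_m}$: $D(N)=\prod_{t=1}^m(s-i_t)$ and $D^\perp(N)=\prod_{t=1}^m(i_t+1)$. *)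

theory Defs
  imports Complex_Main
begin

text \<open>A monomial X_1^{i_1}...X_m^{i_m} is represented by its exponent vector
  i :: nat \<Rightarrow> nat, with index t ranging over {0..<m} (t = 0 corresponds to X_1),
  and with i t = 0 for t \<ge> m so that the representation is unique.\<close>

definition Delta :: "nat \<Rightarrow> nat \<Rightarrow> (nat \<Rightarrow> nat) set" where
  "Delta s m = {i. (\<forall>t<m. i t < s) \<and> (\<forall>t\<ge>m. i t = 0)}"

definition D :: "nat \<Rightarrow> nat \<Rightarrow> (nat \<Rightarrow> nat) \<Rightarrow> nat" where
  "D s m i = (\<Prod>t<m. (s - i t))"

definition Dperp :: "nat \<Rightarrow> (nat \<Rightarrow> nat) \<Rightarrow> nat" where
  "Dperp m i = (\<Prod>t<m. (i t + 1))"

end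

theory Submission
  imports Defs
begin

lemma prod_bounds:
  fixes a :: "nat \<Rightarrow> real" and s :: real
  assumes "\<And>t. t < m \<Longrightarrow> 1 \<le> a t \<and> a t \<le> s"
  shows "1 \<le> (\<Prod>t<m. a t) \<and> (\<Prod>t<m. a t) \<le> s ^ m"
  using assms
proof (induction m)
  case 0 then show ?case by simp
next
  case (Suc m)
  then have IH: "1 \<le> (\<Prod>t<m. a t) \<and> (\<Prod>t<m. a t) \<le> s ^ m" by auto
  have am: "1 \<le> a m \<and> a m \<le> s" using Suc.prems by auto
  have "1 \<le> (\<Prod>t<m. a t) * a m" using IH am
    by (metis mult_mono' mult_1_right order_trans zero_le_one)
  moreover have "(\<Prod>t<m. a t) * a m \<le> s ^ m * s" using IH am
    by (intro mult_mono) auto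
  ultimately show ?case by (simp add: mult.commute)
qed

lemma key:
  fixes a :: "nat \<Rightarrow> real" and s :: real
  assumes s: "1 \<le> s"
    and "\<And>t. t < m \<Longrightarrow> 1 \<le> a t \<and> a t \<le> s"
  shows "k < m \<Longrightarrow> s ^ k * (\<Prod>t<m. (s + 1 - a t)) \<ge> (s + 1) * s ^ (m - 1) - s ^ (m - 1 - k) * (\<Prod>t<m. a t)"
  using assms(2)
proof (induction m arbitrary: k)
  case 0 then show ?case by simp
next
  case (Suc m)
  define B where "B = (\<Prod>t<m. (s + 1 - a t))"
  define P where "P = (\<Prod>t<m. a t)"
  define x where "x = a m"
  have x: "1 \<le> x" "x \<le> s" using Suc.prems x_def by auto
  have PB: "1 \<le> P" "P \<le> s ^ m" using prod_bounds[of m a s] Suc.prems P_def by auto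
  have IH: "\<And>j. j < m \<Longrightarrow> s ^ j * B \<ge> (s + 1) * s ^ (m - 1) - s ^ (m - 1 - j) * P"
    using Suc B_def P_def by auto
  have goal: "s ^ k * (B * (s + 1 - x)) \<ge> (s + 1) * s ^ m - s ^ (m - k) * (P * x)"
  proof (cases "m = 0")
    case True
    then have "k = 0" "P = 1" "B = 1" using Suc.prems P_def B_def by auto
    then show ?thesis using True by simp
  next
    case m0: False
    show ?thesis
    proof (cases "s ^ k \<le> P \<and> k < m")
      case True
      define R where "R = s ^ (m - 1 - k) * P"
      have h: "s ^ k * B \<ge> (s + 1) * s ^ (m - 1) - R" using IH True R_def by auto
      have sm: "s ^ m = s * s ^ (m - 1)" using m0 by (metis Suc_pred' neq0_conv power_Suc)
      have smk: "s ^ (m - k) = s * s ^ (m - 1 - k)" using True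
        by (metis Suc_diff_Suc diff_Suc_1 minus_nat.simps(2) power_Suc Suc_pred' zero_less_diff
            diff_diff_left Suc_eq_plus1 add.commute)
      have Rge: "R \<ge> s ^ (m - 1)"
      proof -
        have "s ^ (m - 1) = s ^ (m - 1 - k) * s ^ k"
          using True by (simp add: power_add[symmetric])
        also have "\<dots> \<le> s ^ (m - 1 - k) * P" using True s by (intro mult_left_mono) auto
        finally show ?thesis using R_def by simp
      qed
      have "s ^ k * (B * (s + 1 - x)) = (s + 1 - x) * (s ^ k * B)" by simp
      also have "\<dots> \<ge> (s + 1 - x) * ((s + 1) * s ^ (m - 1) - R)"
        using h x by (intro mult_left_mono) auto
      finally have l: "s ^ k * (B * (s + 1 - x)) \<ge> (s + 1 - x) * ((s + 1) * s ^ (m - 1) - R)" .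
      have d: "(s + 1 - x) * ((s + 1) * s ^ (m - 1) - R) - ((s + 1) * s ^ m - s * x * R)
          = (s + 1) * (x - 1) * (R - s ^ (m - 1))" unfolding sm by (simp add: algebra_simps)
      have "(s + 1) * (x - 1) * (R - s ^ (m - 1)) \<ge> 0" using x s Rge by auto
      then have "(s + 1 - x) * ((s + 1) * s ^ (m - 1) - R) \<ge> (s + 1) * s ^ m - s * x * R"
        using d by linarith
      moreover have "s ^ (m - k) * (P * x) = s * x * R" unfolding smk R_def by (simp add: algebra_simps)
      ultimately show ?thesis using l by linarith
    next
      case False
      have k1: "k \<ge> 1"
      proof (rule ccontr)
        assume "\<not> 1 \<le> k" then have "k = 0" by simp
        then show False using False PB m0 by auto
      qed
      have Pk: "P \<le> s ^ k"
      proof (cases "k < m")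
        case True then show ?thesis using False by auto
      next
        case False
        then have "k = m" using Suc.prems by auto
        then show ?thesis using PB by simp
      qed
      define Q where "Q = s ^ (m - k) * P"
      have km: "k - 1 < m" using Suc.prems k1 by auto
      have h: "s ^ (k - 1) * B \<ge> (s + 1) * s ^ (m - 1) - Q"
        using IH[OF km] Q_def k1 by (simp add: Suc_diff_le)
      have sk: "s ^ k = s * s ^ (k - 1)" using k1 by (metis Suc_pred' neq0_conv not_one_le_zero power_Suc)
      have sm: "s ^ m = s * s ^ (m - 1)" using m0 by (metis Suc_pred' neq0_conv power_Suc)
      have Qle: "Q \<le> s ^ m"
      proof -
        have "Q \<le> s ^ (m - k) * s ^ k" unfolding Q_def using Pk s by (intro mult_left_mono) auto
        also have "\<dots> = s ^ m" using Suc.prems by (simp add: power_add[symmetric])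
        finally show ?thesis .
      qed
      have "s ^ k * (B * (s + 1 - x)) = s * (s + 1 - x) * (s ^ (k - 1) * B)" unfolding sk by simp
      also have "\<dots> \<ge> s * (s + 1 - x) * ((s + 1) * s ^ (m - 1) - Q)"
        using h x s by (intro mult_left_mono) auto
      finally have l: "s ^ k * (B * (s + 1 - x)) \<ge> s * (s + 1 - x) * ((s + 1) * s ^ (m - 1) - Q)" .
      have d: "s * (s + 1 - x) * ((s + 1) * s ^ (m - 1) - Q) - ((s + 1) * s ^ m - x * Q)
          = (s + 1) * (s - x) * (s ^ m - Q)" unfolding sm by (simp add: algebra_simps)
      have "(s + 1) * (s - x) * (s ^ m - Q) \<ge> 0" using x s Qle by auto
      then have "s * (s + 1 - x) * ((s + 1) * s ^ (m - 1) - Q) \<ge> (s + 1) * s ^ m - x * Q"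
        using d by linarith
      moreover have "s ^ (m - k) * (P * x) = x * Q" unfolding Q_def by simp
      ultimately show ?thesis using l by linarith
    qed
  qed
  then show ?case unfolding B_def P_def x_def by simp
qed

theorem mainTheorem3:
  fixes s m \<delta> v \<delta>perp :: nat
  assumes "s \<ge> 1"
    and "1 \<le> \<delta>" and "\<delta> \<le> s ^ m"
    and "v < m"
    and "s ^ v \<le> \<delta>" and "\<delta> \<le> s ^ (v + 1)"
    and "0 < \<delta>perp"
    and "int \<delta>perp \<le> \<lfloor>(real s - real \<delta> / real s ^ v + 1) * real s ^ (m - v - 1)\<rfloor>"
  shows "{N \<in> Delta s m. Dperp m N < \<delta>perp} \<subseteq> {N \<in> Delta s m. D s m N \<ge> \<delta>}"
proof
  fix N assume "N \<in> {N \<in> Delta s m. Dperp m N < \<delta>perp}"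
  then have N: "N \<in> Delta s m" "Dperp m N < \<delta>perp" by auto
  have lt: "\<And>t. t < m \<Longrightarrow> N t < s" using N(1) unfolding Delta_def by auto
  define a where "a = (\<lambda>t. real (N t + 1))"
  define S where "S = real s"
  have S1: "1 \<le> S" using assms(1) S_def by simp
  have ab: "\<And>t. t < m \<Longrightarrow> 1 \<le> a t \<and> a t \<le> S" using lt a_def S_def
    by (metis Suc_eq_plus1 Suc_leI of_nat_1 of_nat_le_iff le_add2)
  have km: "m - 1 - v < m" using assms(4) by simp
  have K: "S ^ (m - 1 - v) * (\<Prod>t<m. (S + 1 - a t)) \<ge> (S + 1) * S ^ (m - 1) - S ^ (m - 1 - (m - 1 - v)) * (\<Prod>t<m. a t)"
    using key[of S m a "m - 1 - v"] S1 ab km by blast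
  have e1: "m - 1 - (m - 1 - v) = v" using assms(4) by simp
  have DB: "real (D s m N) = (\<Prod>t<m. (S + 1 - a t))"
    unfolding D_def a_def S_def using lt by (auto intro!: prod.cong simp: of_nat_diff less_imp_le)
  have DP: "real (Dperp m N) = (\<Prod>t<m. a t)"
    unfolding Dperp_def a_def by simp
  have Sv: "S ^ v > 0" using S1 by simp
  have "real (Dperp m N) + 1 \<le> real \<delta>perp" using N(2) by linarith
  also have "\<dots> \<le> (S - real \<delta> / S ^ v + 1) * S ^ (m - v - 1)"
    using assms(8) S_def by (metis le_floor_iff of_int_of_nat_eq)
  finally have P: "(\<Prod>t<m. a t) + 1 \<le> (S - real \<delta> / S ^ v + 1) * S ^ (m - v - 1)" using DP by simp
  have "S ^ v * ((\<Prod>t<m. a t) + 1) \<le> S ^ v * ((S - real \<delta> / S ^ v + 1) * S ^ (m - v - 1))"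
    using P Sv by (intro mult_left_mono) auto
  also have "\<dots> = (S + 1) * (S ^ v * S ^ (m - v - 1)) - real \<delta> * S ^ (m - v - 1)"
    using Sv S1 by (simp add: field_simps)
  also have "S ^ v * S ^ (m - v - 1) = S ^ (m - 1)" using assms(4) by (simp add: power_add[symmetric])
  finally have Q: "S ^ v * (\<Prod>t<m. a t) + S ^ v \<le> (S + 1) * S ^ (m - 1) - real \<delta> * S ^ (m - v - 1)"
    by (simp add: algebra_simps)
  have "S ^ (m - 1 - v) * real (D s m N) > S ^ (m - 1 - v) * real \<delta>"
    using K Q Sv e1 DB by (simp add: algebra_simps)
  moreover have "S ^ (m - 1 - v) > 0" using S1 by simp
  ultimately have "real (D s m N) > real \<delta>" by (meson mult_less_cancel_left_pos)
  then show "N \<in> {N \<in> Delta s m. D s m N \<ge> \<delta>}" using N(1) by simp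
qed

end
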